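(* Let $X$ be a real Banach space and let $Y\subset X^*$ be a $w^*$-dense linear subspace such that: (i) the locally convex space $(X,\mu(X,Y))$ is complete; (ii) for every absolutely convex $w^*$-compact set $K\subset Y$, every convex $w^*$-sequentially closed subset of $K$ is $w^*$-closed. Then $(Y,w^* )$ has the Mazur property, i.e. every linear functional $f:Y\to\mathbb{R}$ which is $w^*$-sequentially continuous is $w^*$-continuous.
   Context: $\mu(X,Y)$ denotes the Mackey topology on $X$ associated to the dual pair $\langle X,Y\rangle$: the locally convex topology of uniform convergence on all absolutely convex $w^*$-compact subsets of $Y$. A subset $C$ of a topological space is sequentially closed if no sequence in $C$ converges to a point outside $C$. $w^*$ denotes the weak$^*$ topology $w(X^*,X)$ (restricted to $Y$). *)

theory Defs
  imports "HOL-Analysis.Analysis"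
begin

text \<open>The type 'a \<Rightarrow> real carries the product topology (HOL-Analysis Function_Topology),
  which on X* is exactly the weak-star topology w(X*,X).\<close>
definition dual_space :: "('a::real_normed_vector \<Rightarrow> real) set" where
  "dual_space = {f. bounded_linear f}"

definition lin_subspace :: "('a \<Rightarrow> real) set \<Rightarrow> bool" where
  "lin_subspace Y \<longleftrightarrow> (\<lambda>_. 0) \<in> Y \<and>
     (\<forall>u\<in>Y. \<forall>v\<in>Y. \<forall>a b::real. (\<lambda>x. a * u x + b * v x) \<in> Y)"

definition convex_fset :: "('a \<Rightarrow> real) set \<Rightarrow> bool" where
  "convex_fset C \<longleftrightarrow>
     (\<forall>u\<in>C. \<forall>v\<in>C. \<forall>t::real. 0 \<le> t \<and> t \<le> 1 \<longrightarrow> (\<lambda>x. t * u x + (1 - t) * v x) \<in> C)"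

definition abs_convex_fset :: "('a \<Rightarrow> real) set \<Rightarrow> bool" where
  "abs_convex_fset K \<longleftrightarrow>
     (\<forall>u\<in>K. \<forall>v\<in>K. \<forall>a b::real. \<bar>a\<bar> + \<bar>b\<bar> \<le> 1 \<longrightarrow> (\<lambda>x. a * u x + b * v x) \<in> K)"

definition mackey_sets :: "('a \<Rightarrow> real) set \<Rightarrow> ('a \<Rightarrow> real) set set" where
  "mackey_sets Y = {K. K \<subseteq> Y \<and> abs_convex_fset K \<and> compact K}"

text \<open>Cauchy filters and convergence for mu(X,Y): uniform convergence on the sets in mackey_sets Y.\<close>
definition mackey_cauchy :: "('a \<Rightarrow> real) set \<Rightarrow> 'a filter \<Rightarrow> bool" where
  "mackey_cauchy Y F \<longleftrightarrow> (\<forall>K\<in>mackey_sets Y. \<forall>e>0.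
     eventually (\<lambda>(x, x'). \<forall>y\<in>K. \<bar>y x - y x'\<bar> < e) (prod_filter F F))"

definition mackey_converges :: "('a \<Rightarrow> real) set \<Rightarrow> 'a filter \<Rightarrow> 'a \<Rightarrow> bool" where
  "mackey_converges Y F x0 \<longleftrightarrow> (\<forall>K\<in>mackey_sets Y. \<forall>e>0.
     eventually (\<lambda>x. \<forall>y\<in>K. \<bar>y x - y x0\<bar> < e) F)"

text \<open>Completeness of the locally convex space (X, mu(X,Y)), phrased with Cauchy filters
  (equivalent to completeness with Cauchy nets).\<close>
definition mackey_complete :: "('a \<Rightarrow> real) set \<Rightarrow> bool" where
  "mackey_complete Y \<longleftrightarrow> (\<forall>F::'a filter. F \<noteq> bot \<longrightarrow> mackey_cauchy Y F \<longrightarrow>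
     (\<exists>x0. mackey_converges Y F x0))"

definition seq_closed_fset :: "('a \<Rightarrow> real) set \<Rightarrow> bool" where
  "seq_closed_fset C \<longleftrightarrow> (\<forall>s f. (\<forall>n. s n \<in> C) \<longrightarrow> s \<longlonglongrightarrow> f \<longrightarrow> f \<in> C)"

definition linear_on :: "('a \<Rightarrow> real) set \<Rightarrow> (('a \<Rightarrow> real) \<Rightarrow> real) \<Rightarrow> bool" where
  "linear_on Y f \<longleftrightarrow> (\<forall>u\<in>Y. \<forall>v\<in>Y. \<forall>a b::real.
     f (\<lambda>x. a * u x + b * v x) = a * f u + b * f v)"

definition seq_continuous_on :: "('a \<Rightarrow> real) set \<Rightarrow> (('a \<Rightarrow> real) \<Rightarrow> real) \<Rightarrow> bool" where
  "seq_continuous_on Y f \<longleftrightarrow> (\<forall>s u. (\<forall>n. s n \<in> Y) \<longrightarrow> u \<in> Y \<longrightarrow> s \<longlonglongrightarrow> u \<longrightarrow>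
     (\<lambda>n. f (s n)) \<longlonglongrightarrow> f u)"

definition mazur_property :: "('a \<Rightarrow> real) set \<Rightarrow> bool" where
  "mazur_property Y \<longleftrightarrow> (\<forall>f. linear_on Y f \<longrightarrow> seq_continuous_on Y f \<longrightarrow> continuous_on Y f)"

end

theory Submission
  imports Defs
begin


lemma find_a:
  fixes K :: "('a \<Rightarrow> real) set" and q :: "('a \<Rightarrow> real) \<Rightarrow> real"
  assumes conv: "\<And>u v t. u\<in>K \<Longrightarrow> v\<in>K \<Longrightarrow> 0\<le>t \<Longrightarrow> t\<le>1 \<Longrightarrow> (\<lambda>x. t* u x + (1-t)* v x) \<in> K"
    and sym: "\<And>u. u\<in>K \<Longrightarrow> (\<lambda>x. - u x) \<in> K"
    and conc: "\<And>u v t. u\<in>K \<Longrightarrow> v\<in>K \<Longrightarrow> 0\<le>t \<Longrightarrow> t\<le>1 \<Longrightarrow> t * q u + (1-t) * q v \<le> q (\<lambda>x. t* u x + (1-t)* v x)"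
    and zero: "\<And>y. y\<in>K \<Longrightarrow> y i0 = 0 \<Longrightarrow> q y \<le> 0"
  shows "\<exists>a. \<forall>y\<in>K. q y \<le> a * y i0"
proof -
  have key: "q u / u i0 \<le> q v / v i0" if u: "u\<in>K" "u i0 > 0" and v: "v\<in>K" "v i0 < 0" for u v
  proof -
    define s where "s = u i0"
    define s' where "s' = - v i0"
    have sp: "s > 0" "s' > 0" using u v by (auto simp: s_def s'_def)
    define t where "t = s' / (s + s')"
    have t01: "0 \<le> t" "t \<le> 1" using sp by (auto simp: t_def divide_simps)
    define w where "w = (\<lambda>x. t* u x + (1-t)* v x)"
    have wK: "w \<in> K" using conv[OF u(1) v(1) t01] by (simp add: w_def)
    have "w i0 = t * s - (1 - t) * s'" by (simp add: w_def s_def s'_def)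
    also have "\<dots> = 0" using sp by (simp add: t_def field_simps)
    finally have "q w \<le> 0" using zero[OF wK] by simp
    moreover have "t * q u + (1-t) * q v \<le> q w" using conc[OF u(1) v(1) t01] by (simp add: w_def)
    ultimately have "t * q u + (1-t) * q v \<le> 0" by simp
    moreover have h1: "1 - t = s / (s + s')" using sp by (simp add: t_def field_simps)
    moreover have "t * q u + (1-t) * q v = (s' * q u + s * q v) / (s + s')"
      unfolding h1 by (simp add: t_def add_divide_distrib)
    ultimately have "(s' * q u + s * q v) / (s + s') \<le> 0" by simp
    then have "s' * q u + s * q v \<le> 0" using sp
      by (simp add: divide_le_0_iff)
    then show ?thesis using sp by (simp add: s_def[symmetric] field_simps) (simp add: s'_def field_simps)
  qed
  define S where "S = {q y / y i0 | y. y \<in> K \<and> y i0 > 0}"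
  show ?thesis
  proof (cases "S = {}")
    case True
    show ?thesis
    proof (intro exI[of _ 0] ballI)
      fix y assume y: "y \<in> K"
      have "\<not> y i0 > 0" using True y by (auto simp: S_def)
      moreover have "\<not> y i0 < 0"
      proof
        assume "y i0 < 0"
        then have "(\<lambda>x. - y x) i0 > 0" by simp
        then show False using True sym[OF y] unfolding S_def by blast
      qed
      ultimately show "q y \<le> 0 * y i0" using zero[OF y] by simp
    qed
  next
    case False
    then obtain u where u: "u \<in> K" "u i0 > 0" by (auto simp: S_def)
    have bdd: "bdd_above S"
    proof
      fix z assume "z \<in> S"
      then obtain y where "z = q y / y i0" "y \<in> K" "y i0 > 0" by (auto simp: S_def)
      then show "z \<le> q (\<lambda>x. - u x) / (\<lambda>x. - u x) i0"
        using key[of y "\<lambda>x. - u x"] sym[OF u(1)] u by simp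
    qed
    show ?thesis
    proof (intro exI[of _ "Sup S"] ballI)
      fix y assume y: "y \<in> K"
      consider "y i0 > 0" | "y i0 < 0" | "y i0 = 0" by linarith
      then show "q y \<le> Sup S * y i0"
      proof cases
        case 1
        then have "q y / y i0 \<le> Sup S" using y bdd by (intro cSup_upper) (auto simp: S_def)
        then show ?thesis using 1 by (simp add: divide_le_eq)
      next
        case 2
        have "Sup S \<le> q y / y i0"
          using False by (intro cSup_least) (auto simp: S_def intro!: key y 2)
        then show ?thesis using 2 by (simp add: le_divide_eq mult.commute)
      next
        case 3 then show ?thesis using zero[OF y] by simp
      qed
    qed
  qed
qed

lemma sep_lemma:
  fixes K :: "('a \<Rightarrow> real) set" and I :: "'a set"
  assumes fin: "finite I"
    and conv: "\<And>u v t. u\<in>K \<Longrightarrow> v\<in>K \<Longrightarrow> 0\<le>t \<Longrightarrow> t\<le>1 \<Longrightarrow> (\<lambda>x. t*u x + (1-t) * v x) \<in> K"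
    and sym: "\<And>u. u\<in>K \<Longrightarrow> (\<lambda>x. - u x) \<in> K"
    and W: "W \<ge> 0"
  shows "(\<And>u v t. u\<in>K \<Longrightarrow> v\<in>K \<Longrightarrow> 0\<le>t \<Longrightarrow> t\<le>1 \<Longrightarrow>
            g (\<lambda>x. t*u x + (1-t) * v x) = t * g u + (1-t) * g v) \<Longrightarrow>
         (\<And>y. y\<in>K \<Longrightarrow> g y \<le> d + (\<Sum>i\<in>I. W * \<bar>y i\<bar>)) \<Longrightarrow>
         \<exists>c. \<forall>y\<in>K. g y - (\<Sum>i\<in>I. c i * y i) \<le> d"
  using fin
proof (induction I arbitrary: g rule: finite_induct)
  case empty
  then show ?case by auto
next
  case (insert i0 I)
  define q where "q y = g y - d - (\<Sum>i\<in>I. W * \<bar>y i\<bar>)" for y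
  have conc: "t * q u + (1-t) * q v \<le> q (\<lambda>x. t*u x + (1-t) * v x)"
    if "u\<in>K" "v\<in>K" "0\<le>t" "t\<le>1" for u v t
  proof -
    have trm: "W * \<bar>t * u i + (1-t) * v i\<bar> \<le> t * (W * \<bar>u i\<bar>) + (1-t) * (W * \<bar>v i\<bar>)" for i
    proof -
      have "\<bar>t * u i + (1-t) * v i\<bar> \<le> \<bar>t * u i\<bar> + \<bar>(1-t) * v i\<bar>"
        by (rule abs_triangle_ineq)
      also have "\<dots> = t * \<bar>u i\<bar> + (1-t) * \<bar>v i\<bar>" using that by (simp add: abs_mult)
      finally have "\<bar>t * u i + (1-t) * v i\<bar> \<le> t * \<bar>u i\<bar> + (1-t) * \<bar>v i\<bar>" .
      then have "W * \<bar>t * u i + (1-t) * v i\<bar> \<le> W * (t * \<bar>u i\<bar> + (1-t) * \<bar>v i\<bar>)"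
        using W by (simp add: mult_left_mono)
      then show ?thesis by (simp add: algebra_simps)
    qed
    have "(\<Sum>i\<in>I. W * \<bar>t * u i + (1-t) * v i\<bar>) \<le> (\<Sum>i\<in>I. t * (W * \<bar>u i\<bar>) + (1-t) * (W * \<bar>v i\<bar>))"
      by (rule sum_mono) (rule trm)
    also have "\<dots> = t * (\<Sum>i\<in>I. W * \<bar>u i\<bar>) + (1-t) * (\<Sum>i\<in>I. W * \<bar>v i\<bar>)"
      by (simp add: sum.distrib sum_distrib_left)
    finally show ?thesis using insert.prems(1)[OF that] by (simp add: q_def algebra_simps)
  qed
  have zero: "q y \<le> 0" if "y\<in>K" "y i0 = 0" for y
    using insert.prems(2)[OF that(1)] insert.hyps that(2) by (simp add: q_def)
  obtain a where a: "\<forall>y\<in>K. q y \<le> a * y i0"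
  proof -
    have "\<exists>a. \<forall>y\<in>K. q y \<le> a * y i0"
      using conv sym conc zero by (rule find_a)
    then show ?thesis using that by blast
  qed
  define g' where "g' y = g y - a * y i0" for y
  have "\<exists>c. \<forall>y\<in>K. g' y - (\<Sum>i\<in>I. c i * y i) \<le> d"
  proof (rule insert.IH)
    show "g' (\<lambda>x. t * u x + (1 - t) * v x) = t * g' u + (1 - t) * g' v"
      if "u \<in> K" "v \<in> K" "0 \<le> t" "t \<le> 1" for u v t
      using insert.prems(1)[OF that] by (simp add: g'_def algebra_simps)
    show "g' y \<le> d + (\<Sum>i\<in>I. W * \<bar>y i\<bar>)" if "y \<in> K" for y
      using a that unfolding g'_def q_def by force
  qed
  then obtain c' where c': "\<forall>y\<in>K. g' y - (\<Sum>i\<in>I. c' i * y i) \<le> d" by blast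
  show ?case
  proof (intro exI[of _ "c'(i0 := a)"] ballI)
    fix y assume y: "y \<in> K"
    have "(\<Sum>i\<in>insert i0 I. (c'(i0 := a)) i * y i) = a * y i0 + (\<Sum>i\<in>I. c' i * y i)"
      using insert.hyps by (simp add: sum.insert) (intro sum.cong, auto)
    then show "g y - (\<Sum>i\<in>insert i0 I. (c'(i0 := a)) i * y i) \<le> d"
      using c' y unfolding g'_def by force
  qed
qed



lemma compact_fun_closed:
  fixes K :: "('a \<Rightarrow> real) set"
  assumes "compact K" shows "closed K"
proof -
  have "Hausdorff_space (product_topology (\<lambda>i::'a. euclidean::real topology) UNIV)"
    by (simp add: Hausdorff_space_product_topology)
  then have H: "Hausdorff_space (euclidean :: ('a \<Rightarrow> real) topology)"
    by (metis euclidean_product_topology)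
  have "compactin euclidean K" using assms by simp
  then have "closedin euclidean K" by (rule compactin_imp_closedin[OF H])
  then show ?thesis unfolding closed_closedin .
qed

lemma sublevel_closed:
  fixes Y K :: "('a \<Rightarrow> real) set" and f :: "('a \<Rightarrow> real) \<Rightarrow> real"
  assumes KY: "K \<subseteq> Y" and Kac: "abs_convex_fset K" and Kc: "compact K"
    and lin: "linear_on Y f" and sc: "seq_continuous_on Y f"
    and H: "\<And>C. C \<subseteq> K \<Longrightarrow> convex_fset C \<Longrightarrow> seq_closed_fset C \<Longrightarrow> closed C"
  shows "closed {y\<in>K. \<sigma> * f y \<le> a}"
proof (rule H)
  show "{y \<in> K. \<sigma> * f y \<le> a} \<subseteq> K" by auto
  show "convex_fset {y \<in> K. \<sigma> * f y \<le> a}"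
    unfolding convex_fset_def
  proof (intro ballI allI impI)
    fix u v and t :: real
    assume u: "u \<in> {y \<in> K. \<sigma> * f y \<le> a}" and v: "v \<in> {y \<in> K. \<sigma> * f y \<le> a}" and t: "0 \<le> t \<and> t \<le> 1"
    have "(\<lambda>x. t * u x + (1 - t) * v x) \<in> K"
      using Kac u v t unfolding abs_convex_fset_def by auto
    moreover have "f (\<lambda>x. t * u x + (1 - t) * v x) = t * f u + (1 - t) * f v"
      using lin u v KY unfolding linear_on_def by auto
    moreover have "\<sigma> * (t * f u + (1 - t) * f v) \<le> a"
    proof -
      have "\<sigma> * (t * f u + (1 - t) * f v) = t * (\<sigma> * f u) + (1 - t) * (\<sigma> * f v)"
        by (simp add: algebra_simps)
      also have "\<dots> \<le> t * a + (1 - t) * a"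
        using u v t by (intro add_mono mult_left_mono) auto
      finally show ?thesis by (simp add: algebra_simps)
    qed
    ultimately show "(\<lambda>x. t * u x + (1 - t) * v x) \<in> {y \<in> K. \<sigma> * f y \<le> a}" by simp
  qed
  show "seq_closed_fset {y \<in> K. \<sigma> * f y \<le> a}"
    unfolding seq_closed_fset_def
  proof (intro allI impI)
    fix s g assume s: "\<forall>n. s n \<in> {y \<in> K. \<sigma> * f y \<le> a}" and lim: "s \<longlonglongrightarrow> g"
    have gK: "g \<in> K"
    proof -
      have "closed K" using Kc by (rule compact_fun_closed)
      then show ?thesis using Lim_in_closed_set[OF _ _ _ lim] s by auto
    qed
    have "(\<lambda>n. f (s n)) \<longlonglongrightarrow> f g"
      using sc s gK KY lim unfolding seq_continuous_on_def by auto
    then have "(\<lambda>n. \<sigma> * f (s n)) \<longlonglongrightarrow> \<sigma> * f g" by (intro tendsto_intros)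
    then have "\<sigma> * f g \<le> a"
      by (rule LIMSEQ_le_const2) (use s in auto)
    then show "g \<in> {y \<in> K. \<sigma> * f y \<le> a}" using gK by simp
  qed
qed

lemma cont_on_K:
  fixes Y K :: "('a \<Rightarrow> real) set" and f :: "('a \<Rightarrow> real) \<Rightarrow> real"
  assumes KY: "K \<subseteq> Y" and Kac: "abs_convex_fset K" and Kc: "compact K"
    and lin: "linear_on Y f" and sc: "seq_continuous_on Y f"
    and H: "\<And>C. C \<subseteq> K \<Longrightarrow> convex_fset C \<Longrightarrow> seq_closed_fset C \<Longrightarrow> closed C"
  shows "continuous_on K f"
  unfolding continuous_on_def
proof (intro ballI order_tendstoI)
  fix y0 assume y0: "y0 \<in> K"
  fix a assume a: "a < f y0"
  let ?C = "{y\<in>K. 1 * f y \<le> a}"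
  have "closed ?C" by (rule sublevel_closed[OF KY Kac Kc lin sc H])
  then have "eventually (\<lambda>y. y \<in> - ?C) (nhds y0)"
    using a y0 by (intro eventually_nhds_in_open) auto
  then show "eventually (\<lambda>y. a < f y) (at y0 within K)"
    unfolding eventually_at_filter by eventually_elim auto
next
  fix y0 assume y0: "y0 \<in> K"
  fix a assume a: "f y0 < a"
  let ?C = "{y\<in>K. (-1) * f y \<le> -a}"
  have "closed ?C" by (rule sublevel_closed[OF KY Kac Kc lin sc H])
  then have "eventually (\<lambda>y. y \<in> - ?C) (nhds y0)"
    using a y0 by (intro eventually_nhds_in_open) auto
  then show "eventually (\<lambda>y. f y < a) (at y0 within K)"
    unfolding eventually_at_filter by eventually_elim auto
qed

lemma basis_zero:
  fixes A :: "('a \<Rightarrow> real) set"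
  assumes "open A" "(\<lambda>_. 0) \<in> A"
  shows "\<exists>I r. finite I \<and> r > 0 \<and> (\<forall>y. (\<forall>i\<in>I. \<bar>y i\<bar> < r) \<longrightarrow> y \<in> A)"
proof -
  obtain X where X: "(\<lambda>_. 0) \<in> (\<Pi>\<^sub>E i\<in>UNIV. X i)" "\<forall>i. openin euclidean (X i)"
    "finite {i. X i \<noteq> topspace euclidean}" "(\<Pi>\<^sub>E i\<in>UNIV. X i) \<subseteq> A"
    using product_topology_open_contains_basis[of "\<lambda>i. euclidean" UNIV A "\<lambda>_. 0"] assms
    unfolding open_fun_def by blast
  define I where "I = {i. X i \<noteq> UNIV}"
  have fI: "finite I" using X(3) by (simp add: I_def)
  have "\<forall>i. \<exists>r>0. i \<in> I \<longrightarrow> ball 0 r \<subseteq> X i"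
  proof
    fix i
    have "open (X i)" "(0::real) \<in> X i" using X(1,2) by (auto simp: PiE_iff)
    then obtain r where "r > 0" "ball 0 r \<subseteq> X i" by (meson openE)
    then show "\<exists>r>0. i \<in> I \<longrightarrow> ball 0 r \<subseteq> X i" by blast
  qed
  then obtain R where R: "\<And>i. R i > 0" "\<And>i. i \<in> I \<Longrightarrow> ball 0 (R i) \<subseteq> X i" by metis
  define r where "r = Min (insert 1 (R ` I))"
  have rpos: "r > 0" using fI R(1) by (simp add: r_def)
  have rle: "r \<le> R i" if "i \<in> I" for i using fI that by (simp add: r_def)
  show ?thesis
  proof (intro exI conjI allI impI)
    show "finite I" "r > 0" by fact+
    fix y :: "'a \<Rightarrow> real" assume y: "\<forall>i\<in>I. \<bar>y i\<bar> < r"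
    have "y \<in> (\<Pi>\<^sub>E i\<in>UNIV. X i)"
    proof (simp add: PiE_iff, intro allI)
      fix i show "y i \<in> X i"
      proof (cases "i \<in> I")
        case True
        then have "y i \<in> ball 0 (R i)" using y rle[OF True] by auto
        then show ?thesis using R(2)[OF True] by blast
      next
        case False then show ?thesis by (simp add: I_def)
      qed
    qed
    then show "y \<in> A" using X(4) by blast
  qed
qed



lemma key_approx:
  fixes Y K :: "('a::real_normed_vector \<Rightarrow> real) set" and f :: "('a \<Rightarrow> real) \<Rightarrow> real"
  assumes YD: "Y \<subseteq> dual_space" and lsY: "lin_subspace Y"
    and KY: "K \<subseteq> Y" and Kac: "abs_convex_fset K"
    and lin: "linear_on Y f" and cont: "continuous_on K f" and e: "e > 0"
  shows "\<exists>x. \<forall>y\<in>K. \<bar>y x - f y\<bar> < e"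
proof (cases "K = {}")
  case True then show ?thesis by auto
next
  case False
  then obtain u0 where u0: "u0 \<in> K" by auto
  have comb: "(\<lambda>x. a * u x + b * v x) \<in> K" if "u \<in> K" "v \<in> K" "\<bar>a\<bar> + \<bar>b\<bar> \<le> 1" for u v a b
    using Kac that unfolding abs_convex_fset_def by blast
  have flin: "f (\<lambda>x. a * u x + b * v x) = a * f u + b * f v" if "u \<in> K" "v \<in> K" for u v a b
    using lin that KY unfolding linear_on_def by blast
  have zK: "(\<lambda>_. 0) \<in> K" using comb[OF u0 u0, of 0 0] by simp
  have f0: "f (\<lambda>_. 0) = 0" using flin[OF zK zK, of 0 0] by simp
  have scK: "(\<lambda>x. m * y x) \<in> K" if "y \<in> K" "\<bar>m\<bar> \<le> 1" for y m
    using comb[OF that(1) that(1), of m 0] that by simp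
  have fsc: "f (\<lambda>x. m * y x) = m * f y" if "y \<in> K" for y m
    using flin[OF that that, of m 0] by simp
  define \<delta> where "\<delta> = e / 2"
  have dpos: "\<delta> > 0" using e by (simp add: \<delta>_def)
  obtain A where A: "open A" "(\<lambda>_. 0) \<in> A" "\<forall>y\<in>K. y \<in> A \<longrightarrow> f y \<in> {-\<delta><..<\<delta>}"
    using cont zK f0 dpos unfolding continuous_on_topological
    by (metis (no_types, lifting) greaterThanLessThan_iff neg_less_0_iff_less open_greaterThanLessThan)
  obtain I r where Ir: "finite I" "r > 0" "\<And>y. \<forall>i\<in>I. \<bar>y i\<bar> < r \<Longrightarrow> y \<in> A"
    using basis_zero[OF A(1,2)] by blast
  have bound: "f y \<le> \<delta> + (\<Sum>i\<in>I. (\<delta> / r) * \<bar>y i\<bar>)" if y: "y \<in> K" for y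
  proof -
    define T where "T = (\<Sum>i\<in>I. \<bar>y i\<bar>)"
    have T0: "T \<ge> 0" by (simp add: T_def sum_nonneg)
    define m where "m = r / (T + r)"
    have m: "0 < m" "m \<le> 1" using T0 Ir(2) by (auto simp: m_def field_simps)
    have mT: "m * T < r" using T0 Ir(2) by (simp add: m_def field_simps)
    have "\<forall>i\<in>I. \<bar>(\<lambda>x. m * y x) i\<bar> < r"
    proof
      fix i assume i: "i \<in> I"
      have "\<bar>y i\<bar> \<le> T" unfolding T_def using Ir(1) i by (intro member_le_sum) auto
      then have "m * \<bar>y i\<bar> \<le> m * T" using m by (simp add: mult_left_mono)
      then have "m * \<bar>y i\<bar> < r" using mT by linarith
      then show "\<bar>(\<lambda>x. m * y x) i\<bar> < r" using m by (simp add: abs_mult)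
    qed
    then have "(\<lambda>x. m * y x) \<in> A" by (rule Ir(3))
    then have "f (\<lambda>x. m * y x) < \<delta>" using A(3) scK[OF y] m by auto
    then have "m * f y < \<delta>" using fsc[OF y] by simp
    then have "f y < \<delta> / m" using m by (simp add: field_simps)
    also have "\<delta> / m = \<delta> + (\<delta> / r) * T" using Ir(2) T0 by (simp add: m_def field_simps)
    also have "(\<delta> / r) * T = (\<Sum>i\<in>I. (\<delta> / r) * \<bar>y i\<bar>)" by (simp add: T_def sum_distrib_left)
    finally show ?thesis by simp
  qed
  have conv: "(\<lambda>x. t * u x + (1 - t) * v x) \<in> K" if "u \<in> K" "v \<in> K" "0 \<le> t" "t \<le> 1" for u v t
    using comb[OF that(1,2), of t "1 - t"] that by simp
  have sym: "(\<lambda>x. - u x) \<in> K" if "u \<in> K" for u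
    using scK[OF that, of "-1"] by simp
  have "\<exists>c. \<forall>y\<in>K. f y - (\<Sum>i\<in>I. c i * y i) \<le> \<delta>"
  proof (rule sep_lemma[OF Ir(1) conv sym])
    show "0 \<le> \<delta> / r" using dpos Ir(2) by simp
    show "f (\<lambda>x. t * u x + (1 - t) * v x) = t * f u + (1 - t) * f v" if "u \<in> K" "v \<in> K" for u v t
      using flin[OF that] by simp
    show "f y \<le> \<delta> + (\<Sum>i\<in>I. \<delta> / r * \<bar>y i\<bar>)" if "y \<in> K" for y using bound[OF that] .
  qed
  then obtain c where c: "\<forall>y\<in>K. f y - (\<Sum>i\<in>I. c i * y i) \<le> \<delta>" by blast
  define x where "x = (\<Sum>i\<in>I. c i *\<^sub>R i)"
  show ?thesis
  proof (intro exI[of _ x] ballI)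
    fix y assume y: "y \<in> K"
    have "linear y" using YD KY y unfolding dual_space_def by (auto dest: bounded_linear.linear)
    then have yx: "y x = (\<Sum>i\<in>I. c i * y i)"
      unfolding x_def by (simp add: linear_sum linear_scale o_def)
    have "f y - y x \<le> \<delta>" using c y yx by simp
    moreover have "f (\<lambda>x. - y x) - (\<Sum>i\<in>I. c i * (\<lambda>x. - y x) i) \<le> \<delta>" using c sym[OF y] by blast
    then have "- (f y - y x) \<le> \<delta>" using fsc[OF y, of "-1"] yx by (simp add: sum_negf)
    ultimately show "\<bar>y x - f y\<bar> < e" using dpos by (simp add: \<delta>_def)
  qed
qed



lemma msum_mackey:
  fixes Y K1 K2 :: "('a \<Rightarrow> real) set"
  assumes lsY: "lin_subspace Y" and K1: "K1 \<in> mackey_sets Y" and K2: "K2 \<in> mackey_sets Y"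
  defines "S \<equiv> (\<lambda>p. \<lambda>x. fst p x + snd p x) ` (K1 \<times> K2)"
  shows "S \<in> mackey_sets Y"
proof -
  have K1': "K1 \<subseteq> Y" "abs_convex_fset K1" "compact K1" and K2': "K2 \<subseteq> Y" "abs_convex_fset K2" "compact K2"
    using K1 K2 by (auto simp: mackey_sets_def)
  have "S \<subseteq> Y"
  proof
    fix w assume "w \<in> S"
    then obtain u v where uv: "u \<in> K1" "v \<in> K2" "w = (\<lambda>x. u x + v x)" by (auto simp: S_def)
    have "(\<lambda>x. 1 * u x + 1 * v x) \<in> Y" using lsY uv K1'(1) K2'(1) unfolding lin_subspace_def by blast
    then show "w \<in> Y" using uv by simp
  qed
  moreover have "abs_convex_fset S"
    unfolding abs_convex_fset_def
  proof (intro ballI allI impI)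
    fix w1 w2 and a b :: real assume w1: "w1 \<in> S" and w2: "w2 \<in> S" and ab: "\<bar>a\<bar> + \<bar>b\<bar> \<le> 1"
    obtain u1 v1 where 1: "u1 \<in> K1" "v1 \<in> K2" "w1 = (\<lambda>x. u1 x + v1 x)" using w1 by (auto simp: S_def)
    obtain u2 v2 where 2: "u2 \<in> K1" "v2 \<in> K2" "w2 = (\<lambda>x. u2 x + v2 x)" using w2 by (auto simp: S_def)
    have u: "(\<lambda>x. a * u1 x + b * u2 x) \<in> K1" using K1'(2) 1 2 ab unfolding abs_convex_fset_def by blast
    have v: "(\<lambda>x. a * v1 x + b * v2 x) \<in> K2" using K2'(2) 1 2 ab unfolding abs_convex_fset_def by blast
    have "(\<lambda>x. a * w1 x + b * w2 x) = (\<lambda>p. \<lambda>x. fst p x + snd p x) ((\<lambda>x. a * u1 x + b * u2 x), (\<lambda>x. a * v1 x + b * v2 x))"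
      using 1 2 by (auto simp: algebra_simps)
    then show "(\<lambda>x. a * w1 x + b * w2 x) \<in> S" using u v unfolding S_def by blast
  qed
  moreover have "compact S"
    unfolding S_def
  proof (rule compact_continuous_image)
    show "compact (K1 \<times> K2)" using K1'(3) K2'(3) by (rule compact_Times)
    show "continuous_on (K1 \<times> K2) (\<lambda>p. \<lambda>x. fst p x + snd p x)"
    proof (rule continuous_on_coordinatewise_then_product)
      fix i
      have "continuous_on (K1 \<times> K2) (\<lambda>p. fst p i)"
        by (rule continuous_on_product_then_coordinatewise) (intro continuous_intros)
      moreover have "continuous_on (K1 \<times> K2) (\<lambda>p. snd p i)"
        by (rule continuous_on_product_then_coordinatewise) (intro continuous_intros)
      ultimately show "continuous_on (K1 \<times> K2) (\<lambda>p. fst p i + snd p i)"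
        by (intro continuous_intros)
    qed
  qed
  ultimately show ?thesis by (simp add: mackey_sets_def)
qed

lemma msum_contains:
  fixes K1 K2 :: "('a \<Rightarrow> real) set"
  assumes "(\<lambda>_. 0) \<in> K1" "(\<lambda>_. 0) \<in> K2"
  shows "K1 \<union> K2 \<subseteq> (\<lambda>p. \<lambda>x. fst p x + snd p x) ` (K1 \<times> K2)"
proof
  fix u assume "u \<in> K1 \<union> K2"
  then show "u \<in> (\<lambda>p. \<lambda>x. fst p x + snd p x) ` (K1 \<times> K2)"
  proof
    assume "u \<in> K1"
    then have "(u, \<lambda>_. 0) \<in> K1 \<times> K2" using assms by simp
    then show ?thesis by (rule rev_image_eqI) simp
  next
    assume "u \<in> K2"
    then have "(\<lambda>_. 0, u) \<in> K1 \<times> K2" using assms by simp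
    then show ?thesis by (rule rev_image_eqI) simp
  qed
qed

lemma zero_in:
  assumes "abs_convex_fset K" "K \<noteq> {}" shows "(\<lambda>_. 0) \<in> K"
proof -
  obtain u where "u \<in> K" using assms by auto
  moreover have "\<bar>0::real\<bar> + \<bar>0\<bar> \<le> 1" by simp
  ultimately have "(\<lambda>x. 0 * u x + 0 * u x) \<in> K" using assms(1) unfolding abs_convex_fset_def by blast
  then show ?thesis by simp
qed

lemma seg_mackey:
  fixes Y :: "('a \<Rightarrow> real) set"
  assumes lsY: "lin_subspace Y" and y: "y \<in> Y"
  shows "(\<lambda>t. \<lambda>x. t * y x) ` {-1..1} \<in> mackey_sets Y"
proof -
  let ?S = "(\<lambda>t. \<lambda>x. t * y x) ` {-1..1::real}"
  have "?S \<subseteq> Y"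
  proof
    fix w assume "w \<in> ?S"
    then obtain t where "w = (\<lambda>x. t * y x)" by auto
    moreover have "(\<lambda>x. t * y x + 0 * y x) \<in> Y" using lsY y unfolding lin_subspace_def by blast
    ultimately show "w \<in> Y" by simp
  qed
  moreover have "abs_convex_fset ?S"
    unfolding abs_convex_fset_def
  proof (intro ballI allI impI)
    fix w1 w2 and a b :: real assume w1: "w1 \<in> ?S" and w2: "w2 \<in> ?S" and ab: "\<bar>a\<bar> + \<bar>b\<bar> \<le> 1"
    obtain t1 where 1: "t1 \<in> {-1..1}" "w1 = (\<lambda>x. t1 * y x)" using w1 by auto
    obtain t2 where 2: "t2 \<in> {-1..1}" "w2 = (\<lambda>x. t2 * y x)" using w2 by auto
    have "\<bar>a * t1 + b * t2\<bar> \<le> \<bar>a\<bar> * \<bar>t1\<bar> + \<bar>b\<bar> * \<bar>t2\<bar>"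
      by (metis abs_mult abs_triangle_ineq)
    also have "\<dots> \<le> \<bar>a\<bar> * 1 + \<bar>b\<bar> * 1"
      using 1 2 by (intro add_mono mult_left_mono) auto
    finally have "a * t1 + b * t2 \<in> {-1..1}" using ab by auto
    moreover have "(\<lambda>x. a * w1 x + b * w2 x) = (\<lambda>x. (a * t1 + b * t2) * y x)"
      using 1 2 by (auto simp: algebra_simps)
    ultimately show "(\<lambda>x. a * w1 x + b * w2 x) \<in> ?S" by blast
  qed
  moreover have "compact ?S"
  proof (rule compact_continuous_image)
    show "compact {-1..1::real}" by simp
    show "continuous_on {-1..1} (\<lambda>t. \<lambda>x. t * y x)"
      by (rule continuous_on_coordinatewise_then_product) (intro continuous_intros)
  qed
  ultimately show ?thesis by (simp add: mackey_sets_def)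
qed

theorem proposition3p1:
  fixes Y :: "('a::banach \<Rightarrow> real) set"
  assumes "Y \<subseteq> dual_space"
    and "lin_subspace Y"
    and "dual_space \<subseteq> closure Y"
    and "mackey_complete Y"
    and "\<And>K C. K \<in> mackey_sets Y \<Longrightarrow> C \<subseteq> K \<Longrightarrow> convex_fset C \<Longrightarrow> seq_closed_fset C
           \<Longrightarrow> closed C"
  shows "mazur_property Y"
  unfolding mazur_property_def
proof (intro allI impI)
  fix f assume lin: "linear_on Y f" and sc: "seq_continuous_on Y f"
  have contK: "continuous_on K f" if K: "K \<in> mackey_sets Y" for K
    using K by (intro cont_on_K[OF _ _ _ lin sc assms(5)[OF K]]) (auto simp: mackey_sets_def)
  define A where "A = (\<lambda>(K, e). {x. \<forall>y\<in>K. \<bar>y x - f y\<bar> < e})"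
  define B where "B = {(K, e). K \<in> mackey_sets Y \<and> (e::real) > 0}"
  define F where "F = (INF b\<in>B. principal (A b))"
  have emp: "{} \<in> mackey_sets Y" by (simp add: mackey_sets_def abs_convex_fset_def)
  have "({}, 1) \<in> B" using emp by (simp add: B_def)
  then have Bne: "B \<noteq> {}" by blast
  have dir: "\<exists>x\<in>B. principal (A x) \<le> inf (principal (A a)) (principal (A b))"
    if a: "a \<in> B" and b: "b \<in> B" for a b
  proof -
    obtain K1 e1 where a': "a = (K1, e1)" "K1 \<in> mackey_sets Y" "e1 > 0" using a by (auto simp: B_def)
    obtain K2 e2 where b': "b = (K2, e2)" "K2 \<in> mackey_sets Y" "e2 > 0" using b by (auto simp: B_def)
    show ?thesis
    proof (cases "K1 = {} \<or> K2 = {}")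
      case True
      then show ?thesis
      proof
        assume "K1 = {}"
        then show ?thesis using b a' b' by (intro bexI[of _ b]) (auto simp: A_def)
      next
        assume "K2 = {}"
        then show ?thesis using a a' b' by (intro bexI[of _ a]) (auto simp: A_def)
      qed
    next
      case False
      define S where "S = (\<lambda>p. \<lambda>x. fst p x + snd p x) ` (K1 \<times> K2)"
      have SM: "S \<in> mackey_sets Y" unfolding S_def by (rule msum_mackey[OF assms(2) a'(2) b'(2)])
      have sub: "K1 \<union> K2 \<subseteq> S" unfolding S_def using False a'(2) b'(2)
        by (intro msum_contains zero_in) (auto simp: mackey_sets_def)
      show ?thesis
      proof (intro bexI[of _ "(S, min e1 e2)"])
        show "(S, min e1 e2) \<in> B" using SM a' b' by (simp add: B_def)
        show "principal (A (S, min e1 e2)) \<le> inf (principal (A a)) (principal (A b))"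
          using sub a' b' by (auto simp: A_def)
      qed
    qed
  qed
  have ev: "eventually P F \<longleftrightarrow> (\<exists>b\<in>B. \<forall>x\<in>A b. P x)" for P
    unfolding F_def by (subst eventually_INF_base[OF Bne dir]) (auto simp: eventually_principal)
  have nonbot: "F \<noteq> bot"
  proof
    assume "F = bot"
    then have "eventually (\<lambda>x. False) F" by simp
    then obtain b where b: "b \<in> B" "A b = {}" unfolding ev by auto
    then obtain K e where Ke: "b = (K, e)" "K \<in> mackey_sets Y" "e > 0" by (auto simp: B_def)
    have "\<exists>x. \<forall>y\<in>K. \<bar>y x - f y\<bar> < e"
      using Ke by (intro key_approx[OF assms(1,2) _ _ lin contK]) (auto simp: mackey_sets_def)
    then show False using b Ke by (auto simp: A_def)
  qed
  have evA: "eventually (\<lambda>x. \<forall>y\<in>K. \<bar>y x - f y\<bar> < e) F" if "K \<in> mackey_sets Y" "e > 0" for K e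
    unfolding ev using that by (intro bexI[of _ "(K, e)"]) (auto simp: A_def B_def)
  have "mackey_cauchy Y F"
    unfolding mackey_cauchy_def
  proof (intro ballI allI impI)
    fix K and e :: real assume K: "K \<in> mackey_sets Y" and e: "e > 0"
    show "\<forall>\<^sub>F (x, x') in F \<times>\<^sub>F F. \<forall>y\<in>K. \<bar>y x - y x'\<bar> < e"
      unfolding eventually_prod_same
    proof (intro exI conjI allI impI)
      show "eventually (\<lambda>x. \<forall>y\<in>K. \<bar>y x - f y\<bar> < e / 2) F" using evA[OF K, of "e/2"] e by simp
      fix x x' assume h: "\<forall>y\<in>K. \<bar>y x - f y\<bar> < e / 2" "\<forall>y\<in>K. \<bar>y x' - f y\<bar> < e / 2"
      have "\<bar>y x - y x'\<bar> < e" if "y \<in> K" for y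
        using h(1)[rule_format, OF that] h(2)[rule_format, OF that] by linarith
      then show "case (x, x') of (x, x') \<Rightarrow> \<forall>y\<in>K. \<bar>y x - y x'\<bar> < e" by simp
    qed
  qed
  then obtain x0 where x0: "mackey_converges Y F x0"
    using assms(4) nonbot unfolding mackey_complete_def by blast
  have fy: "f y = y x0" if y: "y \<in> Y" for y
  proof (rule ccontr)
    assume ne: "f y \<noteq> y x0"
    define e where "e = \<bar>f y - y x0\<bar> / 2"
    have e: "e > 0" using ne by (simp add: e_def)
    define Ky where "Ky = (\<lambda>t. \<lambda>x. t * y x) ` {-1..1::real}"
    have Ky: "Ky \<in> mackey_sets Y" unfolding Ky_def by (rule seg_mackey[OF assms(2) y])
    have yK: "y \<in> Ky" unfolding Ky_def by (rule image_eqI[of _ _ 1]) auto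
    have "eventually (\<lambda>x. \<forall>y\<in>Ky. \<bar>y x - y x0\<bar> < e) F" using x0 Ky e unfolding mackey_converges_def by blast
    moreover have "eventually (\<lambda>x. \<forall>y\<in>Ky. \<bar>y x - f y\<bar> < e) F" using evA[OF Ky e] .
    ultimately have "eventually (\<lambda>x. \<bar>y x - y x0\<bar> < e \<and> \<bar>y x - f y\<bar> < e) F"
      by eventually_elim (use yK in auto)
    then obtain x where "\<bar>y x - y x0\<bar> < e" "\<bar>y x - f y\<bar> < e" using eventually_happens'[OF nonbot] by blast
    moreover have "\<bar>f y - y x0\<bar> \<le> \<bar>y x - y x0\<bar> + \<bar>y x - f y\<bar>" by linarith
    ultimately have "\<bar>f y - y x0\<bar> < 2 * e" by linarith
    then show False using e_def by simp
  qed
  have "continuous_on Y (\<lambda>y. y x0)"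
    by (rule continuous_on_subset[OF continuous_on_product_coordinates]) simp
  then show "continuous_on Y f" using fy by (simp cong: continuous_on_cong)
qed

end
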